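(* Write $\dfrac{(q;q)_\infty^2}{(q^2;q^2)_\infty(q^3;q^3)_\infty^2}=\sum_{n\ge0}a_nq^n$. Then for all $n\ge0$: $a_n>0$ if $n\equiv0\pmod3$, $a_n<0$ if $n\equiv1\pmod3$, and $a_n=0$ if $n\equiv2\pmod3$.
   Context: For $|q|<1$, $(a;q)_\infty=\prod_{k\ge0}(1-aq^k)$. *)

theory Defs
  imports "HOL-Analysis.Analysis"
begin

definition qpoch_inf :: "real \<Rightarrow> real \<Rightarrow> real" where
  "qpoch_inf a q = (\<Prod>k. 1 - a * q ^ k)"

definition F :: "real \<Rightarrow> real" where
  "F q = qpoch_inf q q ^ 2 / (qpoch_inf (q^2) (q^2) * qpoch_inf (q^3) (q^3) ^ 2)"

end

theory Submission
  imports Defs "HOL-Computational_Algebra.Formal_Power_Series"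
begin

unbundle no vec_syntax
unbundle fps_syntax

definition Geo :: "nat \<Rightarrow> real fps" where
  "Geo k = Abs_fps (\<lambda>n. if k dvd n then 1 else 0)"

definition good :: "nat \<Rightarrow> real fps \<Rightarrow> bool" where
  "good k H \<longleftrightarrow> H$0 = 1 \<and> (\<forall>j. 0<j \<and> j<k \<longrightarrow> H$j = 0) \<and> (\<forall>j. 0 \<le> H$j)"

lemma nonneg_mult:
  fixes A B :: "real fps"
  assumes "\<forall>n. 0 \<le> A$n" "\<forall>n. 0 \<le> B$n" shows "0 \<le> (A*B)$n"
  unfolding fps_mult_nth using assms by (intro sum_nonneg mult_nonneg_nonneg) auto

lemma good_mult:
  assumes "good k A" "good k B" shows "good k (A*B)"
proof -
  have "(A*B)$j = 0" if "0<j" "j<k" for j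
  proof -
    have "(A*B)$j = (\<Sum>i=0..j. A$i * B$(j-i))" by (simp add: fps_mult_nth)
    also have "\<dots> = 0"
    proof (rule sum.neutral, intro ballI)
      fix i assume "i \<in> {0..j}"
      show "A$i * B$(j-i) = 0"
      proof (cases "i = 0")
        case True then show ?thesis using assms that by (simp add: good_def)
      next
        case False then show ?thesis using assms that \<open>i \<in> {0..j}\<close> by (simp add: good_def)
      qed
    qed
    finally show ?thesis .
  qed
  moreover have "(A*B)$0 = 1" using assms by (simp add: good_def fps_mult_nth)
  moreover have "\<forall>j. 0 \<le> (A*B)$j" using assms by (auto simp: good_def intro!: nonneg_mult)
  ultimately show ?thesis by (simp add: good_def)
qed

lemma good_one: "good k 1"
  by (simp add: good_def)

lemma good_power: "good k A \<Longrightarrow> good k (A^m)"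
  by (induction m) (simp_all add: good_one good_mult)

lemma good_Geo: "0 < k \<Longrightarrow> good k (Geo k)"
  by (auto simp: good_def Geo_def dest: dvd_imp_le)

lemma good_mono:
  assumes "\<forall>n. 0 \<le> A$n" "good k H" shows "A$n \<le> (A*H)$n"
proof -
  have "A$n = A$n * H$(n-n)" using assms by (simp add: good_def)
  also have "\<dots> \<le> (\<Sum>i=0..n. A$i * H$(n-i))"
    by (rule member_le_sum[where f="\<lambda>i. A$i * H$(n-i)"]) (use assms in \<open>auto simp: good_def\<close>)
  finally show ?thesis by (simp add: fps_mult_nth)
qed

lemma good_eq:
  assumes "good k H" "n < k" shows "(A*H)$n = A$n"
proof -
  have "(A*H)$n = (\<Sum>i=0..n. A$i * H$(n-i))" by (simp add: fps_mult_nth)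
  also have "\<dots> = (\<Sum>i\<in>{n}. A$i * H$(n-i))"
    by (rule sum.mono_neutral_right) (use assms in \<open>auto simp: good_def\<close>)
  also have "\<dots> = A$n" using assms by (simp add: good_def)
  finally show ?thesis .
qed

definition PP :: "(nat \<Rightarrow> nat) \<Rightarrow> nat \<Rightarrow> real fps" where
  "PP e K = (\<Prod>k\<in>{1..K}. Geo k ^ e k)"

lemma PP_Suc: "PP e (Suc K) = PP e K * Geo (Suc K) ^ e (Suc K)"
  by (simp add: PP_def prod.cl_ivl_Suc)

lemma PP_nonneg: "0 \<le> PP e K $ n"
proof (induction K arbitrary: n)
  case 0 then show ?case by (simp add: PP_def)
next
  case (Suc K)
  have "good (Suc K) (Geo (Suc K) ^ e (Suc K))" by (intro good_power good_Geo) simp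
  then show ?case unfolding PP_Suc using Suc by (intro nonneg_mult) (auto simp: good_def)
qed

lemma PP_step_eq: "n \<le> K \<Longrightarrow> PP e (Suc K) $ n = PP e K $ n"
  unfolding PP_Suc by (rule good_eq) (auto intro: good_power good_Geo)

lemma PP_step_mono: "PP e K $ n \<le> PP e (Suc K) $ n"
  unfolding PP_Suc by (rule good_mono) (auto intro: good_power good_Geo PP_nonneg)

lemma PP_stable: "n \<le> K \<Longrightarrow> PP e K $ n = PP e n $ n"
proof (induction K rule: dec_induct)
  case base then show ?case by simp
next
  case (step K) then show ?case using PP_step_eq by simp
qed

lemma PP_mono: "K \<le> K' \<Longrightarrow> PP e K $ n \<le> PP e K' $ n"
proof (induction K' rule: dec_induct)
  case base then show ?case by simp
next
  case (step K') then show ?case using PP_step_mono order_trans by blast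
qed

lemma PP_le: "PP e K $ n \<le> PP e n $ n"
proof (cases "n \<le> K")
  case True then show ?thesis using PP_stable[of n K e] by simp
next
  case False then show ?thesis using PP_mono[of K n e n] by simp
qed

lemma Geo1_power_ge: "m \<ge> 1 \<Longrightarrow> (Geo 1 ^ m) $ n \<ge> 1"
proof (induction m rule: dec_induct)
  case base then show ?case by (simp add: Geo_def)
next
  case (step m)
  have g: "good 1 (Geo 1 ^ m)" by (intro good_power good_Geo) simp
  have "(Geo 1 ^ Suc m) $ n = (\<Sum>i=0..n. Geo 1 $ i * (Geo 1 ^ m) $ (n-i))"
    by (simp add: fps_mult_nth)
  also have "\<dots> = (\<Sum>i=0..n. (Geo 1 ^ m) $ (n-i))" by (simp add: Geo_def)
  also have "\<dots> \<ge> (Geo 1 ^ m) $ (n-n)"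
    by (rule member_le_sum[where f="\<lambda>i. (Geo 1 ^ m) $ (n-i)"]) (use g in \<open>auto simp: good_def\<close>)
  finally show ?case using g by (simp add: good_def)
qed

lemma PP_ge1:
  assumes "e 1 \<ge> 1" shows "PP e n $ n \<ge> 1"
proof (cases "n = 0")
  case True then show ?thesis by (simp add: PP_def)
next
  case False
  have "PP e 1 = Geo 1 ^ e 1" by (simp add: PP_def)
  then have "1 \<le> PP e 1 $ n" using Geo1_power_ge assms by simp
  also have "\<dots> \<le> PP e n $ n" using False by (intro PP_mono) simp
  finally show ?thesis .
qed

definition ser :: "real fps \<Rightarrow> real \<Rightarrow> real \<Rightarrow> bool" where
  "ser A x v \<longleftrightarrow> summable (\<lambda>n. norm (A$n * x^n)) \<and> (\<lambda>n. A$n * x^n) sums v"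

lemma ser_mult:
  assumes "ser A x v" "ser B x w" shows "ser (A*B) x (v * w)"
proof -
  define a where "a = (\<lambda>n. A$n * x^n)"
  define b where "b = (\<lambda>n. B$n * x^n)"
  have sa: "summable (\<lambda>n. norm (a n))" and sb: "summable (\<lambda>n. norm (b n))"
    using assms by (auto simp: ser_def a_def b_def)
  have va: "suminf a = v" and vb: "suminf b = w"
    using assms by (auto simp: ser_def a_def b_def sums_iff)
  have eq: "(A*B)$k * x^k = (\<Sum>i\<le>k. a i * b (k - i))" for k
  proof -
    have "(A*B)$k * x^k = (\<Sum>i\<le>k. A$i * B$(k-i) * x^k)"
      by (simp add: fps_mult_nth atMost_atLeast0 sum_distrib_right)
    also have "\<dots> = (\<Sum>i\<le>k. a i * b (k - i))"
      by (intro sum.cong refl) (simp add: a_def b_def power_add[symmetric])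
    finally show ?thesis .
  qed
  have s1: "(\<lambda>k. (A*B)$k * x^k) sums (v * w)"
    using Cauchy_product_sums[OF sa sb] by (simp add: eq va vb)
  have s2: "summable (\<lambda>k. \<Sum>i\<le>k. norm (a i) * norm (b (k - i)))"
    using Cauchy_product_sums[of "\<lambda>n. norm (a n)" "\<lambda>n. norm (b n)"] sa sb
    by (simp add: sums_iff)
  have "summable (\<lambda>k. norm ((A*B)$k * x^k))"
  proof (rule summable_comparison_test'[OF s2])
    fix k
    have "norm (norm ((A*B)$k * x^k)) = norm (\<Sum>i\<le>k. a i * b (k - i))" by (simp add: eq)
    also have "\<dots> \<le> (\<Sum>i\<le>k. norm (a i * b (k - i)))" by (rule norm_sum)
    also have "\<dots> = (\<Sum>i\<le>k. norm (a i) * norm (b (k - i)))" by (simp add: abs_mult)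
    finally show "norm (norm ((A*B)$k * x^k)) \<le> (\<Sum>i\<le>k. norm (a i) * norm (b (k - i)))" .
  qed
  with s1 show ?thesis by (simp add: ser_def)
qed

lemma ser_one: "ser 1 x 1"
proof -
  have e: "(\<lambda>n. (1::real fps)$n * x^n) = (\<lambda>n. if n = 0 then 1 else 0)" by auto
  have e2: "(\<lambda>n. norm ((1::real fps)$n * x^n)) = (\<lambda>n. if n = 0 then 1 else 0)" by auto
  show ?thesis unfolding ser_def e e2
    using sums_single[of 0 "\<lambda>_. 1::real"] by (auto simp: sums_iff)
qed

lemma ser_power: "ser A x v \<Longrightarrow> ser (A^m) x (v^m)"
  by (induction m) (auto simp: ser_one ser_mult)

lemma geo_sub_sums:
  fixes y :: real
  assumes "0 < k" "\<bar>y\<bar> < 1"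
  shows "(\<lambda>n. if k dvd n then y^n else 0) sums (1 / (1 - y^k))"
proof -
  have sm: "strict_mono (\<lambda>m. k * m)" using assms by (auto simp: strict_mono_def)
  have "\<bar>y^k\<bar> < 1" using assms by (simp add: power_abs power_less_one_iff abs_ge_zero)
  then have "(\<lambda>m. (y^k)^m) sums (1 / (1 - y^k))" using geometric_sums[of "y^k"] by simp
  then have "(\<lambda>m. (\<lambda>n. if k dvd n then y^n else 0) (k*m)) sums (1 / (1 - y^k))"
    by (simp add: power_mult)
  then show ?thesis by (subst (asm) sums_mono_reindex[OF sm]) auto
qed

lemma ser_Geo:
  assumes "0 < k" "\<bar>x\<bar> < 1" shows "ser (Geo k) x (1 / (1 - x^k))"
proof -
  have e: "(\<lambda>n. Geo k $ n * x^n) = (\<lambda>n. if k dvd n then x^n else 0)" by (auto simp: Geo_def)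
  have e2: "(\<lambda>n. norm (Geo k $ n * x^n)) = (\<lambda>n. if k dvd n then \<bar>x\<bar>^n else 0)"
    by (auto simp: Geo_def power_abs)
  have "summable (\<lambda>n. if k dvd n then \<bar>x\<bar>^n else 0)"
    using geo_sub_sums[of k "\<bar>x\<bar>"] assms by (auto simp: sums_iff)
  then show ?thesis unfolding ser_def e e2 using geo_sub_sums[OF assms] by simp
qed

definition gK :: "(nat \<Rightarrow> nat) \<Rightarrow> nat \<Rightarrow> real \<Rightarrow> real" where
  "gK e K x = (\<Prod>k\<in>{1..K}. (1 / (1 - x^k)) ^ e k)"

lemma ser_PP: "\<bar>x\<bar> < 1 \<Longrightarrow> ser (PP e K) x (gK e K x)"
proof (induction K)
  case 0 then show ?case by (simp add: PP_def gK_def ser_one)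
next
  case (Suc K)
  have "ser (PP e K * Geo (Suc K) ^ e (Suc K)) x (gK e K x * (1 / (1 - x^Suc K)) ^ e (Suc K))"
    using Suc by (intro ser_mult ser_power ser_Geo) auto
  then show ?case by (simp add: PP_Suc gK_def prod.cl_ivl_Suc)
qed

lemma inv_le_exp:
  fixes t :: real assumes "0 \<le> t" "t < 1" shows "1 / (1 - t) \<le> exp (t / (1 - t))"
proof -
  have "ln (1 / (1 - t)) \<le> 1 / (1 - t) - 1" using assms by (intro ln_le_minus_one) simp
  also have "\<dots> = t / (1 - t)" using assms by (simp add: field_simps)
  finally have "ln (1 / (1 - t)) \<le> t / (1 - t)" .
  then have "exp (ln (1 / (1 - t))) \<le> exp (t / (1 - t))" by simp
  then show ?thesis using assms by simp
qed

lemma gK_bound: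
  fixes y :: real
  assumes "0 \<le> y" "y < 1" "\<forall>k. e k \<le> 2"
  shows "gK e K y \<le> exp (2 / (1 - y)^2)"
proof -
  have "gK e K y \<le> (\<Prod>k\<in>{1..K}. exp (2 * (y^k / (1 - y))))"
    unfolding gK_def
  proof (intro prod_mono conjI)
    fix k assume k: "k \<in> {1..K}"
    have yk1: "y^k \<le> y" using power_decreasing[of 1 k y] assms k by simp
    have yk: "0 \<le> y^k" "y^k < 1" "y^k \<le> y" using assms k yk1
      by auto
    have i1: "1 \<le> 1 / (1 - y^k)" using yk by simp
    show "0 \<le> (1 / (1 - y^k)) ^ e k" using yk by simp
    have "(1 / (1 - y^k)) ^ e k \<le> (1 / (1 - y^k)) ^ 2"
      using assms(3) i1 by (intro power_increasing) auto
    also have "\<dots> \<le> (exp (y^k / (1 - y^k)))^2"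
      using inv_le_exp[OF yk(1,2)] yk by (intro power_mono) auto
    also have "\<dots> = exp (2 * (y^k / (1 - y^k)))" by (simp add: exp_double[symmetric] power2_eq_square exp_add[symmetric])
    also have "\<dots> \<le> exp (2 * (y^k / (1 - y)))"
      using yk assms by (simp add: frac_le)
    finally show "(1 / (1 - y^k)) ^ e k \<le> exp (2 * (y^k / (1 - y)))" .
  qed
  also have "\<dots> = exp (2 / (1 - y) * (\<Sum>k\<in>{1..K}. y^k))"
    by (simp add: exp_sum[symmetric] sum_distrib_left)
  also have "\<dots> \<le> exp (2 / (1 - y) * (1 / (1 - y)))"
  proof -
    have "(\<Sum>k\<in>{1..K}. y^k) \<le> (\<Sum>k. y^k)"
      using assms by (intro sum_le_suminf) (auto intro: summable_geometric)
    also have "\<dots> = 1 / (1 - y)" using assms by (simp add: suminf_geometric)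
    finally have "(\<Sum>k\<in>{1..K}. y^k) \<le> 1 / (1 - y)" .
    then have "2 / (1 - y) * (\<Sum>k\<in>{1..K}. y^k) \<le> 2 / (1 - y) * (1 / (1 - y))"
      by (rule mult_left_mono) (use assms in simp)
    then show ?thesis by (subst exp_le_cancel_iff)
  qed
  also have "\<dots> = exp (2 / (1 - y)^2)" by (simp add: power2_eq_square)
  finally show ?thesis .
qed

lemma genfun:
  assumes e2: "\<forall>k. e k \<le> 2" and e1: "e 1 \<ge> 1"
  shows "\<exists>c. c 0 = 1 \<and> (\<forall>n. c n \<ge> 1) \<and>
    (\<forall>x. \<bar>x\<bar> < 1 \<longrightarrow> summable (\<lambda>n. c n * x^n) \<and> (\<lambda>K. gK e K x) \<longlonglongrightarrow> (\<Sum>n. c n * x^n))"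
proof -
  define c where "c n = PP e n $ n" for n
  have c0: "c 0 = 1" by (simp add: c_def PP_def)
  have c1: "c n \<ge> 1" for n using PP_ge1[of e n] e1 by (simp add: c_def)
  have main: "summable (\<lambda>n. c n * x^n) \<and> (\<lambda>K. gK e K x) \<longlonglongrightarrow> (\<Sum>n. c n * x^n)"
    if x: "\<bar>x\<bar> < 1" for x
  proof -
    define y where "y = \<bar>x\<bar>"
    have y: "0 \<le> y" "y < 1" using x by (auto simp: y_def)
    have sy: "summable (\<lambda>n. c n * y^n)"
    proof (rule summableI_nonneg_bounded)
      fix n show "0 \<le> c n * y^n" using c1[of n] y by simp
    next
      fix N
      have serN: "ser (PP e N) y (gK e N y)" using ser_PP y by simp
      have "(\<Sum>n<N. c n * y^n) = (\<Sum>n<N. PP e N $ n * y^n)"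
        by (intro sum.cong refl) (use PP_stable[of _ N e] in \<open>simp add: c_def\<close>)
      also have "\<dots> \<le> (\<Sum>n. PP e N $ n * y^n)"
        using serN y PP_nonneg by (intro sum_le_suminf) (auto simp: ser_def sums_iff)
      also have "\<dots> = gK e N y" using serN by (simp add: ser_def sums_iff)
      also have "\<dots> \<le> exp (2 / (1 - y)^2)" using gK_bound y e2 by simp
      finally show "(\<Sum>n<N. c n * y^n) \<le> exp (2 / (1 - y)^2)" .
    qed
    have T: "((\<lambda>K. \<Sum>n. PP e K $ n * x^n) \<longlongrightarrow> (\<Sum>n. c n * x^n)) sequentially"
      and S: "summable (\<lambda>n. norm (c n * x^n))"
    proof -
      have lim: "(\<lambda>K. PP e K $ n * x^n) \<longlonglongrightarrow> c n * x^n" for n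
      proof (rule tendsto_eventually)
        show "\<forall>\<^sub>F K in sequentially. PP e K $ n * x^n = c n * x^n"
        proof (rule eventually_mono[OF eventually_ge_at_top[of n]])
          fix K assume "n \<le> K"
          then show "PP e K $ n * x^n = c n * x^n" using PP_stable[of n K e] by (simp add: c_def)
        qed
      qed
      have bnd: "\<forall>\<^sub>F (n, K) in at_top \<times>\<^sub>F sequentially. norm (PP e K $ n * x^n) \<le> c n * y^n"
      proof (rule always_eventually, clarify)
        fix n K
        have "norm (PP e K $ n * x^n) = PP e K $ n * y^n"
          using PP_nonneg by (simp add: y_def abs_mult power_abs)
        also have "\<dots> \<le> c n * y^n" using PP_le y by (simp add: c_def mult_right_mono)
        finally show "norm (PP e K $ n * x^n) \<le> c n * y^n" .
      qed
      have tt: "eventually (\<lambda>K. summable (\<lambda>n. norm (PP e K $ n * x^n))) sequentially \<and>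
           summable (\<lambda>n. norm (c n * x^n)) \<and>
           ((\<lambda>K. \<Sum>n. PP e K $ n * x^n) \<longlongrightarrow> (\<Sum>n. c n * x^n)) sequentially"
        by (rule tannerys_theorem[where a = "\<lambda>n K. PP e K $ n * x^n" and b = "\<lambda>n. c n * x^n"
              and M = "\<lambda>n. c n * y^n" and F = sequentially]) (use lim bnd sy in auto)
      show "((\<lambda>K. \<Sum>n. PP e K $ n * x^n) \<longlongrightarrow> (\<Sum>n. c n * x^n)) sequentially"
        using tt by simp
      show "summable (\<lambda>n. norm (c n * x^n))" using tt by simp
    qed
    have sK: "(\<lambda>n. PP e K $ n * x^n) sums gK e K x" for K
      using ser_PP[OF x, of e K] unfolding ser_def by blast
    have eqK: "(\<lambda>K. gK e K x) = (\<lambda>K. \<Sum>n. PP e K $ n * x^n)"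
      using sK by (simp add: sums_iff fun_eq_iff)
    have "(\<lambda>K. gK e K x) \<longlonglongrightarrow> (\<Sum>n. c n * x^n)" unfolding eqK by (rule T)
    moreover have "summable (\<lambda>n. c n * x^n)" by (rule summable_norm_cancel[OF S])
    ultimately show ?thesis by blast
  qed
  show ?thesis using c0 c1 main by blast
qed

fun qb :: "real \<Rightarrow> nat \<Rightarrow> nat \<Rightarrow> real" where
  "qb t 0 k = (if k = 0 then 1 else 0)"
| "qb t (Suc n) 0 = 1"
| "qb t (Suc n) (Suc k) = qb t n k + t^(Suc k) * qb t n (Suc k)"

fun tri :: "nat \<Rightarrow> nat" where
  "tri 0 = 0"
| "tri (Suc i) = tri i + i"

lemma qb_gt: "n < k \<Longrightarrow> qb t n k = 0"
proof (induction n arbitrary: k)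
  case 0 then show ?case by simp
next
  case (Suc n)
  then obtain k' where "k = Suc k'" by (cases k) auto
  with Suc show ?case by simp
qed

lemma qb_0 [simp]: "qb t n 0 = 1"
  by (cases n) auto

lemma rothe: "(\<Prod>k<N. (a + b * t^k)) = (\<Sum>i\<le>N. qb t N i * t^(tri i) * b^i * a^(N-i))"
proof (induction N arbitrary: b)
  case 0 then show ?case by simp
next
  case (Suc N)
  define h where "h i = qb t N i * t^(tri i + i) * b^i * a^(Suc N - i)" for i
  define A where "A = (\<Sum>i\<le>N. h i)"
  define B where "B = (\<Sum>i\<le>N. qb t N i * t^(tri i + i) * b^(Suc i) * a^(N-i))"
  define D where "D = (\<Sum>i\<le>N. qb t N (Suc i) * t^(tri (Suc i) + Suc i) * b^(Suc i) * a^(N-i))"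
  have "(\<Prod>k<Suc N. (a + b * t^k)) = (a + b) * (\<Prod>k<N. (a + (b*t) * t^k))"
    by (subst prod.lessThan_Suc_shift) (simp add: mult_ac del: prod.lessThan_Suc)
  also have "\<dots> = (a + b) * (\<Sum>i\<le>N. qb t N i * t^(tri i) * (b*t)^i * a^(N-i))"
    by (simp add: Suc.IH)
  also have "\<dots> = A + B"
  proof -
    have "a * (\<Sum>i\<le>N. qb t N i * t^(tri i) * (b*t)^i * a^(N-i)) = A"
      unfolding A_def h_def sum_distrib_left
      by (intro sum.cong refl) (simp add: Suc_diff_le power_add power_mult_distrib mult_ac)
    moreover have "b * (\<Sum>i\<le>N. qb t N i * t^(tri i) * (b*t)^i * a^(N-i)) = B"
      unfolding B_def sum_distrib_left
      by (intro sum.cong refl) (simp add: power_add power_mult_distrib mult_ac)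
    ultimately show ?thesis by (simp add: distrib_right)
  qed
  also have "A = a^(Suc N) + D"
  proof -
    have "(\<Sum>i\<le>Suc N. h i) = A" by (simp add: A_def h_def qb_gt)
    moreover have "(\<Sum>i\<le>Suc N. h i) = h 0 + (\<Sum>i\<le>N. h (Suc i))" by (rule sum.atMost_Suc_shift)
    moreover have "h 0 = a^(Suc N)" by (simp add: h_def)
    moreover have "(\<Sum>i\<le>N. h (Suc i)) = D" by (simp add: h_def D_def)
    ultimately show ?thesis by simp
  qed
  also have "a^(Suc N) + D + B = (\<Sum>i\<le>Suc N. qb t (Suc N) i * t^(tri i) * b^i * a^(Suc N - i))"
  proof -
    have "(\<Sum>i\<le>Suc N. qb t (Suc N) i * t^(tri i) * b^i * a^(Suc N - i))
        = a^(Suc N) + (\<Sum>i\<le>N. qb t (Suc N) (Suc i) * t^(tri (Suc i)) * b^(Suc i) * a^(N - i))"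
      by (subst sum.atMost_Suc_shift) simp
    also have "(\<Sum>i\<le>N. qb t (Suc N) (Suc i) * t^(tri (Suc i)) * b^(Suc i) * a^(N - i)) = B + D"
      unfolding B_def D_def sum.distrib[symmetric]
      by (intro sum.cong refl) (simp add: power_add algebra_simps)
    finally show ?thesis by simp
  qed
  finally show ?case .
qed

definition qf :: "real \<Rightarrow> nat \<Rightarrow> real" where
  "qf t n = (\<Prod>k<n. 1 - t^(Suc k))"

lemma qf_Suc: "qf t (Suc n) = qf t n * (1 - t^(Suc n))"
  by (simp add: qf_def)

lemma qb_closed: "k \<le> n \<Longrightarrow> qb t n k * qf t k * qf t (n-k) = qf t n"
proof (induction n arbitrary: k)
  case 0 then show ?case by (simp add: qf_def)
next
  case (Suc n)
  show ?case
  proof (cases k)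
    case 0 then show ?thesis by (simp add: qf_def)
  next
    case (Suc k')
    with Suc.prems have k': "k' \<le> n" by simp
    have first: "qb t n k' * qf t (Suc k') * qf t (Suc n - Suc k') = qf t n * (1 - t^(Suc k'))"
      using Suc.IH[OF k'] by (simp add: qf_Suc mult_ac)
    have second: "t^(Suc k') * qb t n (Suc k') * qf t (Suc k') * qf t (Suc n - Suc k')
        = t^(Suc k') * qf t n * (1 - t^(Suc n - Suc k'))"
    proof (cases "k' = n")
      case True then show ?thesis by (simp add: qb_gt)
    next
      case False
      then have kn: "Suc k' \<le> n" using k' by simp
      have e: "Suc n - Suc k' = Suc (n - Suc k')" using kn by simp
      have "qb t n (Suc k') * qf t (Suc k') * qf t (n - Suc k') = qf t n" using Suc.IH[OF kn] .
      then show ?thesis unfolding e qf_Suc[of t "n - Suc k'"]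
        using kn by (simp add: Suc_diff_le[symmetric] mult_ac)
    qed
    have "qb t (Suc n) k * qf t k * qf t (Suc n - k)
        = qb t n k' * qf t (Suc k') * qf t (Suc n - Suc k') +
          t^(Suc k') * qb t n (Suc k') * qf t (Suc k') * qf t (Suc n - Suc k')"
      by (simp add: Suc distrib_right)
    also have "\<dots> = qf t n * (1 - t^(Suc k')) + t^(Suc k') * qf t n * (1 - t^(Suc n - Suc k'))"
      using first second by simp
    also have "\<dots> = qf t n * (1 - t^(Suc n))"
    proof -
      obtain d where d: "n = k' + d" using k' le_Suc_ex by blast
      have "Suc n - Suc k' = d" using d by simp
      moreover have "t^(Suc n) = t^(Suc k') * t^d" using d by (simp add: power_add)
      ultimately show ?thesis by (simp add: algebra_simps, blast)
    qed
    also have "\<dots> = qf t (Suc n)" by (simp add: qf_Suc)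
    finally show ?thesis .
  qed
qed

lemma qb_nonneg: "0 \<le> t \<Longrightarrow> 0 \<le> qb t n k"
  by (induction t n k rule: qb.induct) auto

lemma pow_Suc_lt1: "0 \<le> t \<Longrightarrow> t < (1::real) \<Longrightarrow> t^(Suc k) < 1"
  using power_decreasing[of 1 "Suc k" t] by simp

lemma qf_pos: "0 \<le> t \<Longrightarrow> t < 1 \<Longrightarrow> 0 < qf t n"
  unfolding qf_def using pow_Suc_lt1 by (intro prod_pos) (auto simp del: power_Suc)

lemma qf_mono: assumes "0 \<le> t" "t < 1" "m \<le> n" shows "qf t n \<le> qf t m"
  using assms(3)
proof (induction n rule: dec_induct)
  case base then show ?case by simp
next
  case (step n)
  have "qf t (Suc n) \<le> qf t n" unfolding qf_Suc
    using qf_pos[of t n] assms by (simp add: mult_le_cancel_left1 zero_le_power)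
  then show ?case using step by simp
qed

lemma qpoch_lim:
  fixes a q :: real assumes "\<bar>q\<bar> < 1"
  shows "(\<lambda>N. \<Prod>k<N. 1 - a * q^k) \<longlonglongrightarrow> qpoch_inf a q"
    and "convergent_prod (\<lambda>k. 1 - a * q^k)"
proof -
  have "summable (\<lambda>k. norm ((1 - a * q^k) - 1))"
  proof -
    have "summable (\<lambda>k. \<bar>a\<bar> * \<bar>q\<bar>^k)"
      using assms by (intro summable_mult summable_geometric) simp
    then show ?thesis by (simp add: abs_mult power_abs)
  qed
  then show cp: "convergent_prod (\<lambda>k. 1 - a * q^k)"
    by (intro abs_convergent_prod_imp_convergent_prod summable_imp_abs_convergent_prod)
  have "(\<lambda>n. \<Prod>k\<le>n. 1 - a * q^k) \<longlonglongrightarrow> qpoch_inf a q"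
    unfolding qpoch_inf_def by (rule convergent_prod_LIMSEQ[OF cp])
  then have "(\<lambda>n. \<Prod>k<Suc n. 1 - a * q^k) \<longlonglongrightarrow> qpoch_inf a q"
    by (simp add: lessThan_Suc_atMost)
  then show "(\<lambda>N. \<Prod>k<N. 1 - a * q^k) \<longlonglongrightarrow> qpoch_inf a q"
    by (rule LIMSEQ_imp_Suc)
qed

lemma qpoch_pos:
  fixes a q :: real assumes "\<bar>q\<bar> < 1" "\<bar>a\<bar> < 1"
  shows "0 < qpoch_inf a q"
proof -
  have "0 < 1 - a * q^k" for k
  proof -
    have "\<bar>a * q^k\<bar> \<le> \<bar>a\<bar>" using assms by (simp add: abs_mult power_abs power_le_one mult_left_le)
    then show ?thesis using assms by linarith
  qed
  then show ?thesis unfolding qpoch_inf_def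
    using qpoch_lim(2)[OF assms(1)] by (intro less_0_prodinf) auto
qed

lemma qf_lim:
  assumes "0 \<le> t" "t < 1" shows "qf t \<longlonglongrightarrow> qpoch_inf t t"
proof -
  have "qf t = (\<lambda>N. \<Prod>k<N. 1 - t * t^k)" by (simp add: qf_def fun_eq_iff)
  then show ?thesis using qpoch_lim(1)[of t t] assms by simp
qed

lemma qf_ge:
  assumes "0 \<le> t" "t < 1" shows "qpoch_inf t t \<le> qf t n"
proof (rule decseq_ge[OF _ qf_lim[OF assms]])
  show "decseq (qf t)" unfolding decseq_def using qf_mono assms by blast
qed

lemma qb_bound:
  assumes "0 \<le> t" "t < 1" shows "qb t n k \<le> 1 / qpoch_inf t t"
proof (cases "k \<le> n")
  case False then show ?thesis using qpoch_pos[of t t] assms by (simp add: qb_gt)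
next
  case True
  have Q: "0 < qpoch_inf t t" using qpoch_pos[of t t] assms by simp
  have p: "0 < qf t k" "0 < qf t (n-k)" "0 < qf t n" using qf_pos assms by auto
  have "qb t n k = qf t n / (qf t k * qf t (n-k))"
    using qb_closed[OF True, of t] p by (simp add: field_simps)
  also have "\<dots> \<le> qf t (n-k) / (qf t k * qf t (n-k))"
    using p qf_mono[of t "n-k" n] assms by (intro divide_right_mono) auto
  also have "\<dots> = 1 / qf t k" using p by simp
  also have "\<dots> \<le> 1 / qpoch_inf t t" using Q qf_ge[OF assms, of k] p
    by (intro divide_left_mono) auto
  finally show ?thesis .
qed

lemma qb_lim:
  assumes "0 \<le> t" "t < 1"
  shows "(\<lambda>n. qb t (2*n) (n+j)) \<longlonglongrightarrow> 1 / qpoch_inf t t"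
proof -
  define Q where "Q = qpoch_inf t t"
  have Q: "0 < Q" using qpoch_pos[of t t] assms by (simp add: Q_def)
  have L: "qf t \<longlonglongrightarrow> Q" using qf_lim[OF assms] by (simp add: Q_def)
  have l1: "(\<lambda>n. qf t (2*n)) \<longlonglongrightarrow> Q"
    using LIMSEQ_subseq_LIMSEQ[OF L, of "\<lambda>n. 2*n"] by (simp add: strict_mono_def o_def)
  have l2: "(\<lambda>n. qf t (n+j)) \<longlonglongrightarrow> Q"
    using LIMSEQ_ignore_initial_segment[OF L, of j] by simp
  have l3: "(\<lambda>n. qf t (n-j)) \<longlonglongrightarrow> Q"
    by (rule LIMSEQ_offset[of _ j]) (simp add: L)
  have lim: "(\<lambda>n. qf t (2*n) / (qf t (n+j) * qf t (n-j))) \<longlonglongrightarrow> Q / (Q * Q)"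
    using Q by (intro tendsto_divide tendsto_mult l1 l2 l3) auto
  have ev: "\<forall>\<^sub>F n in sequentially. qf t (2*n) / (qf t (n+j) * qf t (n-j)) = qb t (2*n) (n+j)"
  proof (rule eventually_mono[OF eventually_ge_at_top[of j]])
    fix n assume "j \<le> n"
    then have le: "n + j \<le> 2*n" and d: "2*n - (n+j) = n - j" by auto
    have p: "0 < qf t (n+j)" "0 < qf t (n-j)" using qf_pos assms by auto
    show "qf t (2*n) / (qf t (n+j) * qf t (n-j)) = qb t (2*n) (n+j)"
      using qb_closed[OF le, of t] p unfolding d by (simp add: field_simps)
  qed
  have "Q / (Q * Q) = 1 / Q" using Q by simp
  then show ?thesis using Lim_transform_eventually[OF lim ev] by (simp add: Q_def)
qed

lemma tri2: "2 * tri i + i = i * i"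
  by (induction i) (auto simp: algebra_simps)

lemma tri_int: "int (2 * tri i) = int i * int i - int i"
proof -
  have "int (2 * tri i + i) = int (i * i)" by (simp only: tri2)
  then show ?thesis by simp
qed

lemma tri_int2: "2 * int (tri i) = int i * int i - int i"
  using tri_int[of i] by simp

lemma expo1:
  assumes "J \<le> Suc M"
  shows "2 * tri (Suc M + J) + (2*M+1) * (Suc M - J) = 2 * tri (Suc M) + (2*M+1) * Suc M + J^2"
proof -
  obtain r where r: "Suc M = J + r" using assms le_Suc_ex by blast
  have d: "Suc M - J = r" using r by simp
  have hM: "int M + 1 = int J + int r" using r by linarith
  have t1: "2 * int (tri (Suc M + J)) = (int M + 1 + int J) * (int M + 1 + int J) - (int M + 1 + int J)"
    using tri_int2[of "Suc M + J"] by (simp add: algebra_simps)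
  have t2: "2 * int (tri (Suc M)) = (int M + 1) * (int M + 1) - (int M + 1)"
    using tri_int2[of "Suc M"] by (simp add: algebra_simps)
  have "int (2 * tri (Suc M + J) + (2*M+1) * r) = int (2 * tri (Suc M) + (2*M+1) * Suc M + J^2)"
  proof -
    have "int (2 * tri (Suc M + J) + (2*M+1) * r) = 2 * int (tri (Suc M + J)) + (2 * int M + 1) * int r" by (simp add: algebra_simps)
    also have "\<dots> = 2 * int (tri (Suc M)) + (2 * int M + 1) * (int M + 1) + int J * int J"
      using t1 t2 hM by algebra
    also have "\<dots> = int (2 * tri (Suc M) + (2*M+1) * Suc M + J^2)" by (simp add: power2_eq_square algebra_simps)
    finally show ?thesis .
  qed
  then show ?thesis unfolding d by linarith
qed

lemma expo2:
  assumes "J \<le> Suc M"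
  shows "2 * tri (Suc M - J) + (2*M+1) * (Suc M + J) = 2 * tri (Suc M) + (2*M+1) * Suc M + J^2"
proof -
  obtain r where r: "Suc M = J + r" using assms le_Suc_ex by blast
  have d: "Suc M - J = r" using r by simp
  have hM: "int M + 1 = int J + int r" using r by linarith
  have t1: "2 * int (tri r) = int r * int r - int r"
    using tri_int2[of r] by simp
  have t2: "2 * int (tri (Suc M)) = (int M + 1) * (int M + 1) - (int M + 1)"
    using tri_int2[of "Suc M"] by (simp add: algebra_simps)
  have "int (2 * tri r + (2*M+1) * (Suc M + J)) = int (2 * tri (Suc M) + (2*M+1) * Suc M + J^2)"
  proof -
    have "int (2 * tri r + (2*M+1) * (Suc M + J)) = 2 * int (tri r) + (2 * int M + 1) * (int M + 1 + int J)" by (simp add: algebra_simps)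
    also have "\<dots> = 2 * int (tri (Suc M)) + (2 * int M + 1) * (int M + 1) + int J * int J"
      using t1 t2 hM by algebra
    also have "\<dots> = int (2 * tri (Suc M) + (2*M+1) * Suc M + J^2)" by (simp add: power2_eq_square algebra_simps)
    finally show ?thesis .
  qed
  then show ?thesis unfolding d by linarith
qed

lemma fold_sum:
  fixes g :: "nat \<Rightarrow> real"
  shows "(\<Sum>i\<le>2*N. g i) = g N + (\<Sum>j<N. g (N + Suc j) + g (N - Suc j))"
proof (induction N arbitrary: g)
  case 0 then show ?case by simp
next
  case (Suc N)
  define h where "h i = g (Suc i)" for i
  have "(\<Sum>i\<le>2*Suc N. g i) = g 0 + (\<Sum>i\<le>Suc (2*N). h i)"
    unfolding h_def by (subst sum.atMost_Suc_shift[symmetric]) simp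
  also have "\<dots> = g 0 + (\<Sum>i\<le>2*N. h i) + h (Suc (2*N))" by simp
  also have "(\<Sum>i\<le>2*N. h i) = h N + (\<Sum>j<N. h (N + Suc j) + h (N - Suc j))" by (rule Suc.IH)
  also have "(\<Sum>j<N. h (N + Suc j) + h (N - Suc j)) = (\<Sum>j<N. g (Suc N + Suc j) + g (Suc N - Suc j))"
    by (intro sum.cong refl) (auto simp: h_def Suc_diff_Suc)
  finally show ?case by (simp add: h_def mult_2)
qed

lemma prod_split:
  fixes f :: "nat \<Rightarrow> 'a::comm_monoid_mult" and m n :: nat
  shows "(\<Prod>k<m+n. f k) = (\<Prod>k<m. f k) * (\<Prod>k<n. f (m+k))"
  by (induction n) (auto simp: mult_ac)

lemma prod_pow2: "(\<Prod>k<N. (q::real)^(2*k)) = q^(2*tri N)"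
  by (induction N) (auto simp: power_add)

lemma qb_sym:
  assumes "0 \<le> t" "t < 1" "k \<le> n" shows "qb t n (n - k) = qb t n k"
proof -
  have p: "0 < qf t k" "0 < qf t (n-k)" "0 < qf t n" using qf_pos assms by auto
  have a: "qb t n k * qf t k * qf t (n-k) = qf t n" using qb_closed[OF assms(3)] .
  have b: "qb t n (n-k) * qf t (n-k) * qf t (n - (n-k)) = qf t n" using qb_closed[of "n-k" n t] by simp
  have "n - (n - k) = k" using assms by simp
  with a b p show ?thesis by (metis mult.assoc mult.commute mult_right_cancel order_less_irrefl)
qed

definition JP :: "real \<Rightarrow> real \<Rightarrow> nat \<Rightarrow> real" where
  "JP z q N = (\<Prod>k<N. (1 + z * q^(2*k+1)) * (1 + q^(2*k+1) / z))"

definition w :: "real \<Rightarrow> real \<Rightarrow> nat \<Rightarrow> real" where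
  "w z q j = q^((Suc j)^2) * (z^(Suc j) + 1 / z^(Suc j))"

lemma jtp_fin:
  assumes q0: "q \<noteq> 0" and q1: "\<bar>q\<bar> < 1" and z0: "z \<noteq> 0"
  shows "JP z q N = qb (q^2) (2*N) N + (\<Sum>j<N. qb (q^2) (2*N) (N + Suc j) * w z q j)"
proof (cases N)
  case 0 then show ?thesis by (simp add: JP_def)
next
  case (Suc M)
  define t where "t = q^2"
  define a where "a = q^(2*M+1)"
  have t01: "0 \<le> t" "t < 1" using q1 by (auto simp: t_def abs_square_less_1)
  define C where "C = z^N * q^(2*tri N) * a^N"
  have C0: "C \<noteq> 0" using q0 z0 by (simp add: C_def a_def)
  have R: "(\<Prod>k<2*N. a + z * t^k) = (\<Sum>i\<le>2*N. qb t (2*N) i * t^(tri i) * z^i * a^(2*N-i))"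
    by (rule rothe)
  have L: "(\<Prod>k<2*N. a + z * t^k) = C * JP z q N"
  proof -
    have split: "(\<Prod>k<2*N. a + z * t^k) = (\<Prod>k<N. a + z * t^k) * (\<Prod>k<N. a + z * t^(N+k))"
      using prod_split[of "\<lambda>k. a + z * t^k" N N] by (simp add: mult_2)
    have A: "(\<Prod>k<N. a + z * t^(N+k)) = a^N * (\<Prod>k<N. 1 + z * q^(2*k+1))"
    proof -
      have "a + z * t^(N+k) = a * (1 + z * q^(2*k+1))" for k
      proof -
        have "t^(N+k) = a * q^(2*k+1)"
          by (simp add: t_def a_def Suc power_mult[symmetric] power_add[symmetric])
        then show ?thesis by (simp add: algebra_simps)
      qed
      then show ?thesis by (simp add: prod.distrib)
    qed
    have B: "(\<Prod>k<N. a + z * t^k) = z^N * q^(2*tri N) * (\<Prod>k<N. 1 + q^(2*k+1) / z)"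
    proof -
      have "(\<Prod>k<N. a + z * t^k) = (\<Prod>k<N. a + z * t^(N - Suc k))"
        by (rule prod.nat_diff_reindex[symmetric])
      also have "\<dots> = (\<Prod>k<N. (z * q^(2*(N - Suc k))) * (1 + q^(2*k+1) / z))"
      proof (intro prod.cong refl)
        fix k assume "k \<in> {..<N}"
        then have kM: "k \<le> M" using Suc by simp
        have ex: "2*(N - Suc k) + (2*k+1) = 2*M+1" using kM Suc by simp
        have "q^(2*(N - Suc k)) * q^(2*k+1) = q^(2*(N - Suc k) + (2*k+1))" by (simp only: power_add)
        also have "\<dots> = a" unfolding ex a_def ..
        finally have "q^(2*(N - Suc k)) * q^(2*k+1) = a" .
        then show "a + z * t^(N - Suc k) = (z * q^(2*(N - Suc k))) * (1 + q^(2*k+1) / z)"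
          using z0 by (simp add: t_def power_mult[symmetric] field_simps)
      qed
      also have "\<dots> = z^N * (\<Prod>k<N. q^(2*(N - Suc k))) * (\<Prod>k<N. 1 + q^(2*k+1) / z)"
        by (simp add: prod.distrib)
      also have "(\<Prod>k<N. q^(2*(N - Suc k))) = q^(2*tri N)"
        using prod.nat_diff_reindex[of "\<lambda>k. q^(2*k)" N] prod_pow2[of q N] by simp
      finally show ?thesis .
    qed
    show ?thesis unfolding split A B JP_def C_def prod.distrib by (simp add: mult_ac)
  qed
  define g where "g i = qb t (2*N) i * t^(tri i) * z^i * a^(2*N-i)" for i
  have gN: "g N = C * qb t (2*N) N"
    by (simp add: g_def C_def t_def power_mult[symmetric] mult_2)
  have gj: "g (N + Suc j) + g (N - Suc j) = C * (qb t (2*N) (N + Suc j) * w z q j)" if "j < N" for j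
  proof -
    define J where "J = Suc j"
    have JN: "J \<le> Suc M" using that Suc by (simp add: J_def)
    have e1: "q^(2 * tri (N + J)) * a^(N - J) = q^(2*tri N) * a^N * q^(J^2)"
    proof -
      have "q^(2 * tri (N + J)) * a^(N - J) = q^(2 * tri (N + J) + (2*M+1) * (N - J))"
        by (simp only: a_def power_mult power_add)
      also have "\<dots> = q^(2*tri N + (2*M+1)*N + J^2)" using expo1[OF JN] by (simp only: Suc)
      also have "\<dots> = q^(2*tri N) * a^N * q^(J^2)" by (simp only: a_def power_mult power_add)
      finally show ?thesis .
    qed
    have e2: "q^(2 * tri (N - J)) * a^(N + J) = q^(2*tri N) * a^N * q^(J^2)"
    proof -
      have "q^(2 * tri (N - J)) * a^(N + J) = q^(2 * tri (N - J) + (2*M+1) * (N + J))"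
        by (simp only: a_def power_mult power_add)
      also have "\<dots> = q^(2*tri N + (2*M+1)*N + J^2)" using expo2[OF JN] by (simp only: Suc)
      also have "\<dots> = q^(2*tri N) * a^N * q^(J^2)" by (simp only: a_def power_mult power_add)
      finally show ?thesis .
    qed
    have sym: "qb t (2*N) (N - J) = qb t (2*N) (N + J)"
    proof -
      have "qb t (2*N) (2*N - (N + J)) = qb t (2*N) (N + J)"
        using JN Suc by (intro qb_sym t01) auto
      moreover have "2*N - (N + J) = N - J" by simp
      ultimately show ?thesis by simp
    qed
    have zJ: "z^(N - J) = z^N / z^J" using JN Suc z0 by (simp add: power_diff)
    have d1: "2*N - (N + J) = N - J" and d2: "2*N - (N - J) = N + J" using JN Suc by auto
    have "g (N + J) = qb t (2*N) (N + J) * (q^(2 * tri (N + J)) * a^(N - J)) * z^(N+J)"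
      unfolding g_def d1 by (simp add: t_def power_mult[symmetric] mult_ac)
    also have "\<dots> = C * (qb t (2*N) (N + J) * q^(J^2) * z^J)"
      unfolding e1 C_def by (simp add: power_add mult_ac)
    finally have G1: "g (N + J) = C * (qb t (2*N) (N + J) * q^(J^2) * z^J)" .
    have "g (N - J) = qb t (2*N) (N + J) * (q^(2 * tri (N - J)) * a^(N + J)) * z^(N-J)"
      unfolding g_def d2 sym by (simp add: t_def power_mult[symmetric] mult_ac)
    also have "\<dots> = C * (qb t (2*N) (N + J) * q^(J^2) / z^J)"
      unfolding e2 C_def zJ by (simp add: mult_ac)
    finally have G2: "g (N - J) = C * (qb t (2*N) (N + J) * q^(J^2) / z^J)" .
    show ?thesis unfolding J_def[symmetric] G1 G2 w_def by (simp add: algebra_simps)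
  qed
  have "(\<Sum>i\<le>2*N. g i) = C * (qb t (2*N) N + (\<Sum>j<N. qb t (2*N) (N + Suc j) * w z q j))"
  proof -
    have S: "(\<Sum>j<N. g (N + Suc j) + g (N - Suc j)) = (\<Sum>j<N. C * (qb t (2*N) (N + Suc j) * w z q j))"
      by (rule sum.cong[OF refl], rule gj) simp
    show ?thesis unfolding fold_sum gN S by (simp add: sum_distrib_left distrib_left)
  qed
  with R L have "C * JP z q N = C * (qb t (2*N) N + (\<Sum>j<N. qb t (2*N) (N + Suc j) * w z q j))"
    by (simp add: g_def)
  with C0 show ?thesis by (simp add: t_def)
qed

lemma aux_summable:
  fixes q c :: real assumes "\<bar>q\<bar> < 1" "0 \<le> c"
  shows "summable (\<lambda>j. \<bar>q\<bar>^((Suc j)^2) * c^(Suc j))"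
proof -
  have eq: "\<bar>q\<bar>^((Suc j)^2) * c^(Suc j) = (\<bar>q\<bar>^(Suc j) * c)^(Suc j)" for j
    by (simp only: power2_eq_square power_mult power_mult_distrib)
  have "(\<lambda>j. \<bar>q\<bar>^(Suc j) * c) \<longlonglongrightarrow> 0 * c"
    using assms by (intro tendsto_mult tendsto_const LIMSEQ_Suc[OF LIMSEQ_power_zero]) auto
  then have "eventually (\<lambda>j. \<bar>q\<bar>^(Suc j) * c < 1/2) sequentially"
    by (intro order_tendstoD(2)) auto
  then have ev: "eventually (\<lambda>j. norm (\<bar>q\<bar>^((Suc j)^2) * c^(Suc j)) \<le> (1/2)^(Suc j)) sequentially"
  proof eventually_elim
    case (elim j)
    have "norm (\<bar>q\<bar>^((Suc j)^2) * c^(Suc j)) = (\<bar>q\<bar>^(Suc j) * c)^(Suc j)"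
      using assms unfolding eq by (simp add: abs_mult)
    also have "\<dots> \<le> (1/2)^(Suc j)" using elim assms by (intro power_mono) auto
    finally show ?case .
  qed
  show ?thesis
    by (rule summable_comparison_test_ev[OF ev]) (intro summable_ignore_initial_segment[where k=1, simplified] summable_geometric, simp)
qed

lemma w_summable:
  assumes "\<bar>q\<bar> < 1" "z \<noteq> 0"
  shows "summable (\<lambda>j. norm (w z q j))"
proof -
  have s: "summable (\<lambda>j. \<bar>q\<bar>^((Suc j)^2) * \<bar>z\<bar>^(Suc j) + \<bar>q\<bar>^((Suc j)^2) * (1/\<bar>z\<bar>)^(Suc j))"
    using assms by (intro summable_add aux_summable) auto
  show ?thesis
  proof (rule summable_comparison_test'[OF s])
    fix j
    have "norm (norm (w z q j)) = \<bar>q\<bar>^((Suc j)^2) * \<bar>z^(Suc j) + 1 / z^(Suc j)\<bar>"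
      by (simp add: w_def abs_mult power_abs)
    also have "\<dots> \<le> \<bar>q\<bar>^((Suc j)^2) * (\<bar>z\<bar>^(Suc j) + (1/\<bar>z\<bar>)^(Suc j))"
    proof (intro mult_left_mono)
      have "\<bar>z^(Suc j) + 1 / z^(Suc j)\<bar> \<le> \<bar>z^(Suc j)\<bar> + \<bar>1 / z^(Suc j)\<bar>" by (rule abs_triangle_ineq)
      also have "\<dots> = \<bar>z\<bar>^(Suc j) + (1/\<bar>z\<bar>)^(Suc j)" by (simp only: power_abs abs_divide abs_one power_one_over)
      finally show "\<bar>z^(Suc j) + 1 / z^(Suc j)\<bar> \<le> \<bar>z\<bar>^(Suc j) + (1/\<bar>z\<bar>)^(Suc j)" .
    qed simp
    finally show "norm (norm (w z q j)) \<le> \<bar>q\<bar>^((Suc j)^2) * \<bar>z\<bar>^(Suc j) + \<bar>q\<bar>^((Suc j)^2) * (1/\<bar>z\<bar>)^(Suc j)"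
      by (simp add: algebra_simps)
  qed
qed

definition Th :: "real \<Rightarrow> real \<Rightarrow> real" where
  "Th z q = 1 + (\<Sum>j. w z q j)"

lemma jtp:
  assumes q0: "q \<noteq> 0" and q1: "\<bar>q\<bar> < 1" and z0: "z \<noteq> 0"
  shows "(\<lambda>N. qf (q^2) N * JP z q N) \<longlonglongrightarrow> Th z q"
proof -
  define t where "t = q^2"
  have t01: "0 \<le> t" "t < 1" using q1 by (auto simp: t_def abs_square_less_1)
  define Q where "Q = qpoch_inf t t"
  have Q: "0 < Q" using qpoch_pos[of t t] t01 by (simp add: Q_def)
  have lq: "qf t \<longlonglongrightarrow> Q" using qf_lim[OF t01] by (simp add: Q_def)
  have l0: "(\<lambda>N. qb t (2*N) N) \<longlonglongrightarrow> 1 / Q" using qb_lim[OF t01, of 0] by (simp add: Q_def)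
  define a where "a j N = (if j < N then qb t (2*N) (N + Suc j) * w z q j else 0)" for j N
  have lim: "(\<lambda>N. a j N) \<longlonglongrightarrow> w z q j / Q" for j
  proof -
    have "(\<lambda>N. qb t (2*N) (N + Suc j) * w z q j) \<longlonglongrightarrow> 1 / Q * w z q j"
      using qb_lim[OF t01, of "Suc j"] by (intro tendsto_mult tendsto_const) (simp add: Q_def)
    moreover have "\<forall>\<^sub>F N in sequentially. qb t (2*N) (N + Suc j) * w z q j = a j N"
      using eventually_gt_at_top[of j] by eventually_elim (simp add: a_def)
    ultimately show ?thesis using Lim_transform_eventually by fastforce
  qed
  have bnd: "\<forall>\<^sub>F (j, N) in at_top \<times>\<^sub>F sequentially. norm (a j N) \<le> norm (w z q j) / Q"
  proof (rule always_eventually, clarify)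
    fix j N
    have "norm (a j N) \<le> (1 / Q) * norm (w z q j)"
    proof (cases "j < N")
      case True
      have "norm (a j N) = qb t (2*N) (N + Suc j) * norm (w z q j)"
        using True qb_nonneg[OF t01(1)] by (simp add: a_def abs_mult)
      also have "\<dots> \<le> (1 / Q) * norm (w z q j)"
        using qb_bound[OF t01] by (intro mult_right_mono) (auto simp: Q_def)
      finally show ?thesis .
    next
      case False then show ?thesis using Q by (simp add: a_def)
    qed
    then show "norm (a j N) \<le> norm (w z q j) / Q" by simp
  qed
  have sM: "summable (\<lambda>j. norm (w z q j) / Q)"
    using w_summable[OF q1 z0] by (rule summable_divide)
  have tt: "eventually (\<lambda>N. summable (\<lambda>j. norm (a j N))) sequentially \<and>
      summable (\<lambda>j. norm (w z q j / Q)) \<and>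
      ((\<lambda>N. \<Sum>j. a j N) \<longlongrightarrow> (\<Sum>j. w z q j / Q)) sequentially"
    by (rule tannerys_theorem[where a = a and b = "\<lambda>j. w z q j / Q"
          and M = "\<lambda>j. norm (w z q j) / Q" and F = sequentially]) (use lim bnd sM in auto)
  have sumeq: "(\<Sum>j. a j N) = (\<Sum>j<N. qb t (2*N) (N + Suc j) * w z q j)" for N
    by (subst suminf_finite[of "{..<N}"]) (auto simp: a_def)
  have ws: "summable (\<lambda>j. w z q j)" using w_summable[OF q1 z0] summable_norm_cancel by blast
  have lS: "(\<lambda>N. \<Sum>j<N. qb t (2*N) (N + Suc j) * w z q j) \<longlonglongrightarrow> (\<Sum>j. w z q j) / Q"
    using tt unfolding sumeq by (simp add: suminf_divide[OF ws])
  have L0: "(\<lambda>N. qf t N * (qb t (2*N) N + (\<Sum>j<N. qb t (2*N) (N + Suc j) * w z q j)))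
      \<longlonglongrightarrow> Q * (1 / Q + (\<Sum>j. w z q j) / Q)"
    by (intro tendsto_mult tendsto_add lq l0 lS)
  have eTh: "Q * (1 / Q + (\<Sum>j. w z q j) / Q) = Th z q"
    using Q by (simp add: Th_def field_simps)
  have EQ: "(\<lambda>N. qf (q^2) N * JP z q N) = (\<lambda>N. qf t N * (qb t (2*N) N + (\<Sum>j<N. qb t (2*N) (N + Suc j) * w z q j)))"
    unfolding t_def jtp_fin[OF q0 q1 z0] ..
  show ?thesis unfolding EQ using L0 unfolding eTh .
qed

definition P1 :: "real \<Rightarrow> nat \<Rightarrow> real" where
  "P1 x K = (\<Prod>k<K. 1 - x * x^k)"

definition AA :: "(nat \<Rightarrow> nat) \<Rightarrow> nat \<Rightarrow> real \<Rightarrow> real" where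
  "AA e K x = gK e K x * P1 x K ^ 2"

lemma pow_lt1: "\<bar>x\<bar> < 1 \<Longrightarrow> 0 < n \<Longrightarrow> 1 - x^n \<noteq> (0::real)"
proof -
  assume "\<bar>x\<bar> < 1" "0 < n"
  then have "\<bar>x^n\<bar> < 1" by (simp add: power_abs power_less_one_iff)
  then show ?thesis by auto
qed

lemma AA_0: "AA e 0 x = 1"
  by (simp add: AA_def gK_def P1_def)

lemma AA_Suc:
  assumes "e (K+1) \<le> 2" "\<bar>x\<bar> < 1"
  shows "AA e (K+1) x = AA e K x * (1 - x^(K+1))^(2 - e (K+1))"
proof -
  define u where "u = 1 - x^(K+1)"
  have u0: "u \<noteq> 0" unfolding u_def by (rule pow_lt1[OF assms(2)]) simp
  have g: "gK e (K+1) x = gK e K x * (1 / u)^(e (K+1))"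
    by (simp add: gK_def u_def)
  have p: "P1 x (K+1) = P1 x K * u" by (simp add: P1_def u_def)
  have "(1 / u)^(e (K+1)) * u^2 = u^(2 - e (K+1))"
  proof -
    have "u^2 = u^(e (K+1)) * u^(2 - e (K+1))" using assms(1) by (simp add: power_add[symmetric])
    then show ?thesis using u0 by (simp add: power_one_over field_simps)
  qed
  then show ?thesis unfolding AA_def g p u_def[symmetric] by (simp add: power_mult_distrib mult_ac)
qed

lemma AA_6:
  assumes "\<forall>k. e k \<le> 2" "\<bar>x\<bar> < 1"
  shows "AA e (6*N+6) x = AA e (6*N) x *
     (1 - x^(6*N+1))^(2 - e (6*N+1)) * (1 - x^(6*N+2))^(2 - e (6*N+2)) *
     (1 - x^(6*N+3))^(2 - e (6*N+3)) * (1 - x^(6*N+4))^(2 - e (6*N+4)) *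
     (1 - x^(6*N+5))^(2 - e (6*N+5)) * (1 - x^(6*N+6))^(2 - e (6*N+6))"
proof -
  have s: "AA e (K+1) x = AA e K x * (1 - x^(K+1))^(2 - e (K+1))" for K
    using AA_Suc assms by blast
  have "AA e (6*N+6) x = AA e (6*N+5) x * (1 - x^(6*N+6))^(2 - e (6*N+6))" using s[of "6*N+5"] unfolding add.assoc[symmetric] by (simp only: add.assoc numeral_plus_one semiring_norm)
  moreover have "AA e (6*N+5) x = AA e (6*N+4) x * (1 - x^(6*N+5))^(2 - e (6*N+5))" using s[of "6*N+4"] unfolding add.assoc[symmetric] by (simp only: add.assoc numeral_plus_one semiring_norm)
  moreover have "AA e (6*N+4) x = AA e (6*N+3) x * (1 - x^(6*N+4))^(2 - e (6*N+4))" using s[of "6*N+3"] unfolding add.assoc[symmetric] by (simp only: add.assoc numeral_plus_one semiring_norm)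
  moreover have "AA e (6*N+3) x = AA e (6*N+2) x * (1 - x^(6*N+3))^(2 - e (6*N+3))" using s[of "6*N+2"] unfolding add.assoc[symmetric] by (simp only: add.assoc numeral_plus_one semiring_norm)
  moreover have "AA e (6*N+2) x = AA e (6*N+1) x * (1 - x^(6*N+2))^(2 - e (6*N+2))" using s[of "6*N+1"] unfolding add.assoc[symmetric] by (simp only: add.assoc numeral_plus_one semiring_norm)
  moreover have "AA e (6*N+1) x = AA e (6*N) x * (1 - x^(6*N+1))^(2 - e (6*N+1))" using s[of "6*N"] .
  ultimately show ?thesis by (simp add: mult_ac)
qed

definition e0 :: "nat \<Rightarrow> nat" where
  "e0 k = (if k mod 3 \<noteq> 0 then 2 else if k mod 6 = 3 then 0 else 1)"

definition e1 :: "nat \<Rightarrow> nat" where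
  "e1 k = (if k mod 6 = 2 \<or> k mod 6 = 3 \<or> k mod 6 = 4 then 2 else 1)"

lemma e0_le: "e0 k \<le> 2" by (simp add: e0_def)
lemma e1_le: "e1 k \<le> 2" by (simp add: e1_def)
lemma e0_1: "e0 1 \<ge> 1" by (simp add: e0_def)
lemma e1_1: "e1 1 \<ge> 1" by (simp add: e1_def)

lemma mods:
  "(6*N+1) mod 3 = 1" "(6*N+2) mod 3 = 2" "(6*N+3) mod 3 = 0" "(6*N+4) mod 3 = 1"
  "(6*N+5) mod 3 = 2" "(6*N+6) mod 3 = 0"
  "(6*N+1) mod 6 = 1" "(6*N+2) mod 6 = 2" "(6*N+3) mod 6 = 3" "(6*N+4) mod 6 = 4"
  "(6*N+5) mod 6 = 5" "(6*N+6) mod 6 = (0::nat)"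
  by presburger+

lemma e0_vals: "e0 (6*N+1) = 2" "e0 (6*N+2) = 2" "e0 (6*N+3) = 0" "e0 (6*N+4) = 2"
  "e0 (6*N+5) = 2" "e0 (6*N+6) = 1"
  by (simp_all only: e0_def mods) simp_all

lemma e1_vals: "e1 (6*N+1) = 1" "e1 (6*N+2) = 2" "e1 (6*N+3) = 2" "e1 (6*N+4) = 2"
  "e1 (6*N+5) = 1" "e1 (6*N+6) = 1"
  by (simp_all only: e1_def mods) simp_all

lemma JP_Suc: "JP z q (Suc N) = JP z q N * ((1 + z * q^(2*N+1)) * (1 + q^(2*N+1) / z))"
  by (simp add: JP_def)

lemma G0_fin:
  assumes "\<bar>x\<bar> < 1"
  shows "AA e0 (6*N) x = qf ((x^3)^2) N * JP (-1) (x^3) N"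
proof (induction N)
  case 0 then show ?case by (simp add: AA_0 qf_def JP_def)
next
  case (Suc N)
  have p1: "((x^3)^2)^(Suc N) = x^(6*N+6)" by (simp only: power_mult[symmetric]) (rule arg_cong[where f="\<lambda>n. x^n"], simp)
  have p2: "(x^3)^(2*N+1) = x^(6*N+3)" by (simp only: power_mult[symmetric]) (rule arg_cong[where f="\<lambda>n. x^n"], simp)
  have "AA e0 (6*Suc N) x = AA e0 (6*N+6) x" by (simp add: add.commute)
  also have "\<dots> = AA e0 (6*N) x * (1 - x^(6*N+3))^2 * (1 - x^(6*N+6))"
    unfolding AA_6[OF allI[OF e0_le] assms] e0_vals by simp
  also have "\<dots> = qf ((x^3)^2) (Suc N) * JP (-1) (x^3) (Suc N)"
    unfolding Suc.IH qf_Suc JP_Suc p1 p2 by (simp add: power2_eq_square)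
  finally show ?case .
qed

lemma G1_fin:
  assumes "\<bar>x\<bar> < 1" "x \<noteq> 0"
  shows "AA e1 (6*N) x = qf ((x^3)^2) N * JP (-(x^2)) (x^3) N"
proof (induction N)
  case 0 then show ?case by (simp add: AA_0 qf_def JP_def)
next
  case (Suc N)
  have p1: "((x^3)^2)^(Suc N) = x^(6*N+6)" by (simp only: power_mult[symmetric]) (rule arg_cong[where f="\<lambda>n. x^n"], simp)
  have p2: "1 + (-(x^2)) * (x^3)^(2*N+1) = 1 - x^(6*N+5)"
  proof -
    have "x^2 * (x^3)^(2*N+1) = x^(6*N+5)" by (simp only: power_mult[symmetric] power_add[symmetric]) (rule arg_cong[where f="\<lambda>n. x^n"], simp)
    then show ?thesis by simp
  qed
  have p3: "1 + (x^3)^(2*N+1) / (-(x^2)) = 1 - x^(6*N+1)"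
  proof -
    have "(x^3)^(2*N+1) = x^2 * x^(6*N+1)" by (simp only: power_mult[symmetric] power_add[symmetric]) (rule arg_cong[where f="\<lambda>n. x^n"], simp)
    then show ?thesis using assms(2) by simp
  qed
  have "AA e1 (6*Suc N) x = AA e1 (6*N+6) x" by (simp add: add.commute)
  also have "\<dots> = AA e1 (6*N) x * (1 - x^(6*N+1)) * (1 - x^(6*N+5)) * (1 - x^(6*N+6))"
    unfolding AA_6[OF allI[OF e1_le] assms(1)] e1_vals by simp
  also have "\<dots> = qf ((x^3)^2) (Suc N) * JP (-(x^2)) (x^3) (Suc N)"
    unfolding Suc.IH qf_Suc JP_Suc p1 p2 p3 by (simp add: mult_ac)
  finally show ?case .
qed

lemma prod_2N:
  fixes N :: nat shows "(\<Prod>k<2*N. f k) = (\<Prod>k<N. f (2*k) * (f (2*k+1) :: real))"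
  by (induction N) (auto simp: mult_ac)

lemma P1_qf: "P1 (q^2) N = qf (q^2) N"
  by (simp add: P1_def qf_def)

lemma gauss:
  assumes q0: "q \<noteq> 0" and q1: "\<bar>q\<bar> < 1"
  shows "Th (-1) q = qpoch_inf q q ^ 2 / qpoch_inf (q^2) (q^2)"
proof -
  have t1: "\<bar>q^2\<bar> < 1" using q1 by (simp add: abs_square_less_1)
  define Od where "Od N = (\<Prod>k<N. 1 - q^(2*k+1))" for N
  have P2pos: "0 < qpoch_inf (q^2) (q^2)" using qpoch_pos[OF t1 t1] .
  have qfpos: "0 < qf (q^2) N" for N using qf_pos[of "q^2" N] t1 by (simp add: abs_square_less_1)
  have id1: "P1 q (2*N) = Od N * qf (q^2) N" for N
  proof -
    have "P1 q (2*N) = (\<Prod>k<N. (1 - q * q^(2*k)) * (1 - q * q^(2*k+1)))"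
      unfolding P1_def by (rule prod_2N)
    also have "\<dots> = (\<Prod>k<N. (1 - q^(2*k+1)) * (1 - (q^2)^(Suc k)))"
    proof (intro prod.cong refl)
      fix k
      have "q * q^(2*k+1) = (q^2)^(Suc k)" by (simp only: power_mult[symmetric] power_Suc[symmetric]) (rule arg_cong[where f="\<lambda>n. q^n"], simp)
      then show "(1 - q * q^(2*k)) * (1 - q * q^(2*k+1)) = (1 - q^(2*k+1)) * (1 - (q^2)^(Suc k))"
        by simp
    qed
    also have "\<dots> = Od N * qf (q^2) N" by (simp add: Od_def qf_def prod.distrib)
    finally show ?thesis .
  qed
  have id2: "qf (q^2) N * JP (-1) q N = P1 q (2*N) ^ 2 / P1 (q^2) N" for N
  proof -
    have "JP (-1) q N = Od N ^ 2" by (simp add: JP_def Od_def power2_eq_square prod.distrib[symmetric])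
    then show ?thesis unfolding id1 P1_qf using qfpos[of N] by (simp add: power2_eq_square field_simps)
  qed
  have L1: "(\<lambda>N. P1 q (2*N) ^ 2 / P1 (q^2) N) \<longlonglongrightarrow> qpoch_inf q q ^ 2 / qpoch_inf (q^2) (q^2)"
  proof (intro tendsto_divide tendsto_power)
    have "P1 q \<longlonglongrightarrow> qpoch_inf q q" unfolding P1_def using qpoch_lim(1)[OF q1] by simp
    then show "(\<lambda>N. P1 q (2*N)) \<longlonglongrightarrow> qpoch_inf q q"
      using LIMSEQ_subseq_LIMSEQ[of "P1 q" _ "\<lambda>n. 2*n"] by (simp add: strict_mono_def o_def)
    show "(\<lambda>N. P1 (q^2) N) \<longlonglongrightarrow> qpoch_inf (q^2) (q^2)"
      unfolding P1_def using qpoch_lim(1)[OF t1] by simp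
    show "qpoch_inf (q^2) (q^2) \<noteq> 0" using P2pos by simp
  qed
  have L2: "(\<lambda>N. P1 q (2*N) ^ 2 / P1 (q^2) N) \<longlonglongrightarrow> Th (-1) q"
    using jtp[OF q0 q1, of "-1"] unfolding id2 by simp
  show ?thesis using LIMSEQ_unique[OF L2 L1] .
qed

lemma Glim:
  assumes e: "\<forall>k. e k \<le> 2" and S: "(\<lambda>K. gK e K x) \<longlonglongrightarrow> S"
    and x1: "\<bar>x\<bar> < 1" and x0: "x \<noteq> 0" and z0: "z \<noteq> 0"
    and fin: "\<And>N. AA e (6*N) x = qf ((x^3)^2) N * JP z (x^3) N"
  shows "S = Th z (x^3) / qpoch_inf x x ^ 2"
proof -
  have P: "0 < qpoch_inf x x" using qpoch_pos[OF x1 x1] .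
  have L1: "(\<lambda>N. AA e (6*N) x) \<longlonglongrightarrow> S * qpoch_inf x x ^ 2"
    unfolding AA_def
  proof (intro tendsto_mult tendsto_power)
    show "(\<lambda>N. gK e (6*N) x) \<longlonglongrightarrow> S"
      using LIMSEQ_subseq_LIMSEQ[OF S, of "\<lambda>n. 6*n"] by (simp add: strict_mono_def o_def)
    have "P1 x \<longlonglongrightarrow> qpoch_inf x x" unfolding P1_def using qpoch_lim(1)[OF x1] by simp
    then show "(\<lambda>N. P1 x (6*N)) \<longlonglongrightarrow> qpoch_inf x x"
      using LIMSEQ_subseq_LIMSEQ[of "P1 x" _ "\<lambda>n. 6*n"] by (simp add: strict_mono_def o_def)
  qed
  have x3: "x^3 \<noteq> 0" "\<bar>x^3\<bar> < 1" using x0 x1 by (auto simp: power_abs power_less_one_iff)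
  have L2: "(\<lambda>N. AA e (6*N) x) \<longlonglongrightarrow> Th z (x^3)"
    unfolding fin by (rule jtp[OF x3 z0])
  have "S * qpoch_inf x x ^ 2 = Th z (x^3)" using LIMSEQ_unique[OF L1 L2] .
  then show ?thesis using P by (simp add: field_simps)
qed

lemma w_m1: "w (-1) q j = 2 * (-1)^(Suc j) * q^((Suc j)^2)"
proof -
  have "1 / (-1::real)^(Suc j) = (-1)^(Suc j)" by (cases "even j") auto
  then show ?thesis by (simp add: w_def)
qed

lemma piece_summable:
  assumes q1: "\<bar>q\<bar> < 1"
  shows "summable (\<lambda>m. w (-1) q (3*m + r))"
proof -
  have s: "summable (\<lambda>m. 2 * (\<bar>q\<bar>^((Suc m)^2) * 1^(Suc m)))"
    using aux_summable[OF q1, of 1] by (intro summable_mult) simp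
  have "summable (\<lambda>m. norm (w (-1) q (3*m + r)))"
  proof (rule summable_comparison_test'[OF s])
    fix m
    have le: "(Suc m)^2 \<le> (Suc (3*m + r))^2" by (intro power_mono) auto
    have "norm (norm (w (-1) q (3*m + r))) = 2 * \<bar>q\<bar>^((Suc (3*m+r))^2)"
      by (simp add: w_m1 abs_mult power_abs)
    also have "\<dots> \<le> 2 * \<bar>q\<bar>^((Suc m)^2)"
      using q1 le by (simp add: power_decreasing)
    finally show "norm (norm (w (-1) q (3*m + r))) \<le> 2 * (\<bar>q\<bar>^((Suc m)^2) * 1^(Suc m))" by simp
  qed
  then show ?thesis by (rule summable_norm_cancel)
qed

lemma term_id:
  assumes q0: "q \<noteq> 0"
  shows "w (-1) q (3*m+3) + w (-1) q (3*m+1) = -2 * q * w (-(q^6)) (q^9) m"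
proof -
  define s :: real where "s = (-1)^(Suc m)"
  define A where "A = q^((3*m+2)^2)"
  define B where "B = q^(6*(m+1))"
  have B0: "B \<noteq> 0" using q0 by (simp add: B_def)
  have e1: "q^((Suc (3*m+3))^2) = A * B^2"
  proof -
    have ex: "(Suc (3*m+3))^2 = (3*m+2)^2 + 6*(m+1)*2" by (simp add: power2_eq_square algebra_simps)
    show ?thesis by (unfold A_def B_def ex power_add power_mult) (rule refl)
  qed
  have e2: "q^((Suc (3*m+1))^2) = A"
    by (simp add: A_def)
  have e3: "q * (q^9)^((Suc m)^2) = A * B"
  proof -
    have "1 + 9 * (Suc m)^2 = (3*m+2)^2 + 6*(m+1)" by (simp add: power2_eq_square algebra_simps)
    then have "q^(1 + 9 * (Suc m)^2) = A * B" by (simp add: A_def B_def power_add)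
    then show ?thesis by (simp add: power_add power_mult)
  qed
  have sg1: "(-1::real)^(Suc (3*m+3)) = - s" by (simp add: s_def power_add power_mult)
  have sg2: "(-1::real)^(Suc (3*m+1)) = - s" by (simp add: s_def power_add power_mult)
  have z1: "(-(q^6))^(Suc m) = s * B"
  proof -
    have "B = (q^6)^(Suc m)" by (simp only: B_def power_mult) simp
    then show ?thesis unfolding s_def by (simp only: power_minus[of "q^6"])
  qed
  have "w (-1) q (3*m+3) + w (-1) q (3*m+1) = -2 * s * (A * B^2 + A)"
    unfolding w_m1 e1 e2 sg1 sg2 by (simp add: algebra_simps)
  also have "\<dots> = -2 * (q * (q^9)^((Suc m)^2)) * (s * B + 1 / (s * B))"
  proof -
    have ss: "s * s = 1" by (simp add: s_def power_mult_distrib[symmetric])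
    have s0: "s \<noteq> 0" using ss by auto
    have iss: "1 / s = s"
    proof -
      have "1 / s = (s * s) / s" using ss by simp
      also have "\<dots> = s" using s0 by simp
      finally show ?thesis .
    qed
    have "1 / (s * B) = (1 / s) * (1 / B)" by simp
    also have "\<dots> = s / B" unfolding iss by simp
    finally have sb: "1 / (s * B) = s / B" .
    show ?thesis unfolding e3 sb using B0 by (simp add: field_simps power2_eq_square)
  qed
  also have "\<dots> = -2 * q * w (-(q^6)) (q^9) m"
    unfolding w_def z1 by (simp add: mult_ac)
  finally show ?thesis .
qed

lemma dissect:
  assumes q0: "q \<noteq> 0" and q1: "\<bar>q\<bar> < 1"
  shows "Th (-1) q = Th (-1) (q^9) - 2 * q * Th (-(q^6)) (q^9)"
proof -
  define v where "v = w (-1) q"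
  have vs: "summable v" unfolding v_def by (rule summable_norm_cancel[OF w_summable[OF q1]]) simp
  have s0: "summable (\<lambda>m. v (3*m))" and s1: "summable (\<lambda>m. v (3*m+1))" and s2: "summable (\<lambda>m. v (3*m+2))"
    using piece_summable[OF q1, of 0] piece_summable[OF q1, of 1] piece_summable[OF q1, of 2]
    by (simp_all add: v_def)
  have grp: "(\<lambda>m. v (3*m) + v (3*m+1) + v (3*m+2)) sums (\<Sum>j. v j)"
  proof -
    have "(\<lambda>m. sum v {m*3..<m*3+3}) sums (\<Sum>j. v j)"
      using sums_group[OF summable_sums[OF vs], of 3] by simp
    moreover have "sum v {m*3..<m*3+3} = v (3*m) + v (3*m+1) + v (3*m+2)" for m
      by (simp add: numeral_3_eq_3 mult.commute add_ac)
    ultimately show ?thesis by simp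
  qed
  have split: "(\<Sum>j. v j) = (\<Sum>m. v (3*m)) + (\<Sum>m. v (3*m+1)) + (\<Sum>m. v (3*m+2))"
    using sums_unique[OF grp] suminf_add[OF s0 s1] suminf_add[OF summable_add[OF s0 s1] s2] by simp
  have h0: "(\<Sum>m. v (3*m)) = v 0 + (\<Sum>m. v (3*m+3))"
  proof -
    have "(\<Sum>m. v (3*m+3)) = (\<Sum>m. v (3*m)) - v 0"
      using suminf_split_head[OF s0] by (simp add: add.commute)
    then show ?thesis by linarith
  qed
  have s3: "summable (\<lambda>m. v (3*m+3))"
    using summable_ignore_initial_segment[OF s0, of 1] by (simp add: algebra_simps)
  have h2: "(\<Sum>m. v (3*m+2)) = (\<Sum>m. w (-1) (q^9) m)"
  proof (intro suminf_cong)
    fix m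
    have "(-1::real)^(Suc (3*m+2)) = (-1)^(Suc m)" by (simp add: power_add power_mult)
    moreover have "q^((Suc (3*m+2))^2) = (q^9)^((Suc m)^2)"
    proof -
      have "(Suc (3*m+2))^2 = 9 * (Suc m)^2" by (simp add: power2_eq_square algebra_simps)
      then show ?thesis by (simp add: power_mult)
    qed
    ultimately show "v (3*m+2) = w (-1) (q^9) m" by (simp add: v_def w_m1)
  qed
  have h13: "(\<Sum>m. v (3*m+3)) + (\<Sum>m. v (3*m+1)) = -2 * q * (\<Sum>m. w (-(q^6)) (q^9) m)"
  proof -
    have "(\<Sum>m. v (3*m+3)) + (\<Sum>m. v (3*m+1)) = (\<Sum>m. v (3*m+3) + v (3*m+1))"
      using suminf_add[OF s3 s1] .
    also have "\<dots> = (\<Sum>m. -2 * q * w (-(q^6)) (q^9) m)"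
      unfolding v_def using term_id[OF q0] by simp
    also have "\<dots> = -2 * q * (\<Sum>m. w (-(q^6)) (q^9) m)"
    proof -
      have q9: "\<bar>q^9\<bar> < 1" using q1 by (simp add: power_abs power_less_one_iff)
      have "summable (\<lambda>m. w (-(q^6)) (q^9) m)"
        by (rule summable_norm_cancel[OF w_summable[OF q9]]) (use q0 in simp)
      then show ?thesis by (rule suminf_mult)
    qed
    finally show ?thesis .
  qed
  have v0: "v 0 = -2 * q" by (simp add: v_def w_m1)
  show ?thesis
    unfolding Th_def v_def[symmetric] split h0 h2 using h13 v0 by (simp add: algebra_simps)
qed

lemma qpoch_00: "qpoch_inf 0 0 = 1"
proof -
  have "(\<lambda>N. \<Prod>k<N. 1 - (0::real) * 0^k) \<longlonglongrightarrow> qpoch_inf 0 0" by (rule qpoch_lim(1)) simp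
  then have "(\<lambda>N. 1::real) \<longlonglongrightarrow> qpoch_inf 0 0" by simp
  from LIMSEQ_unique[OF this tendsto_const] show ?thesis by simp
qed

lemma F_0: "F 0 = 1"
  by (simp add: F_def qpoch_00)

lemma sums_spread:
  fixes c :: "nat \<Rightarrow> real"
  assumes S: "(\<lambda>m. c m * (q^3)^m) sums S" and r: "r < 3"
  shows "(\<lambda>n. if n mod 3 = r then c (n div 3) * q^n else 0) sums (q^r * S)"
proof -
  define f where "f n = (if n mod 3 = r then c (n div 3) * q^n else 0)" for n
  have sm: "strict_mono (\<lambda>m. 3*m + r)" by (auto simp: strict_mono_def)
  have "(\<lambda>m. q^r * (c m * (q^3)^m)) sums (q^r * S)" using sums_mult[OF S] .
  moreover have "f (3*m + r) = q^r * (c m * (q^3)^m)" for m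
  proof -
    have m1: "(3*m + r) mod 3 = r" and m2: "(3*m + r) div 3 = m" using r by auto
    have h: "q^(3*m) = (q^3)^m" by (rule power_mult)
    have p: "q^(3*m+r) = q^r * (q^3)^m" unfolding power_add h by (rule mult.commute)
    show ?thesis unfolding f_def m1 m2 p by simp
  qed
  ultimately have A: "(\<lambda>m. f (3*m + r)) sums (q^r * S)" by simp
  have Z: "f n = 0" if "n \<notin> range (\<lambda>m. 3*m + r)" for n
  proof -
    have "n mod 3 \<noteq> r"
    proof
      assume h: "n mod 3 = r"
      have "n = 3 * (n div 3) + n mod 3" by (rule mult_div_mod_eq[symmetric])
      then have "n = 3 * (n div 3) + r" unfolding h .
      then show False using that by blast
    qed
    then show ?thesis by (simp add: f_def)
  qed
  have eqv: "(\<lambda>m. f (3*m + r)) sums (q^r * S) \<longleftrightarrow> f sums (q^r * S)"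
    by (rule sums_mono_reindex[OF sm]) (rule Z)
  have "f sums (q^r * S)" using A eqv by (rule iffD1[rotated])
  moreover have "f = (\<lambda>n. if n mod 3 = r then c (n div 3) * q^n else 0)" by (rule ext) (simp add: f_def)
  ultimately show ?thesis by simp
qed

theorem theorem1p3:
  shows "\<exists>a :: nat \<Rightarrow> real.
           (\<forall>q::real. \<bar>q\<bar> < 1 \<longrightarrow> (\<lambda>n. a n * q ^ n) sums F q) \<and>
           (\<forall>n. (n mod 3 = 0 \<longrightarrow> a n > 0) \<and>
                (n mod 3 = 1 \<longrightarrow> a n < 0) \<and>
                (n mod 3 = 2 \<longrightarrow> a n = 0))"
proof -
  obtain c0 where c0_0: "c0 0 = 1" and c0_ge: "\<forall>n. c0 n \<ge> 1"
    and c0_lim: "\<forall>x. \<bar>x\<bar> < 1 \<longrightarrow> summable (\<lambda>n. c0 n * x^n) \<and> (\<lambda>K. gK e0 K x) \<longlonglongrightarrow> (\<Sum>n. c0 n * x^n)"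
    using genfun[of e0] e0_le e0_1 by blast
  obtain c1 where c1_ge: "\<forall>n. c1 n \<ge> 1"
    and c1_lim: "\<forall>x. \<bar>x\<bar> < 1 \<longrightarrow> summable (\<lambda>n. c1 n * x^n) \<and> (\<lambda>K. gK e1 K x) \<longlonglongrightarrow> (\<Sum>n. c1 n * x^n)"
    using genfun[of e1] e1_le e1_1 by blast
  define a where "a n = (if n mod 3 = 0 then c0 (n div 3) else if n mod 3 = 1 then -2 * c1 (n div 3) else 0)" for n
  have signs: "(n mod 3 = 0 \<longrightarrow> a n > 0) \<and> (n mod 3 = 1 \<longrightarrow> a n < 0) \<and> (n mod 3 = 2 \<longrightarrow> a n = 0)" for n
  proof -
    have "c0 (n div 3) \<ge> 1" "c1 (n div 3) \<ge> 1" using c0_ge c1_ge by auto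
    then show ?thesis by (auto simp: a_def)
  qed
  have sums: "(\<lambda>n. a n * q ^ n) sums F q" if q1: "\<bar>q\<bar> < 1" for q
  proof (cases "q = 0")
    case True
    have "(\<lambda>n. a n * 0 ^ n) sums a 0" by (rule powser_sums_zero)
    then show ?thesis using True c0_0 F_0 by (simp add: a_def)
  next
    case False
    define x where "x = q^3"
    have x1: "\<bar>x\<bar> < 1" using q1 by (simp add: x_def power_abs power_less_one_iff)
    have x0: "x \<noteq> 0" using False by (simp add: x_def)
    define S0 where "S0 = (\<Sum>n. c0 n * x^n)"
    define S1 where "S1 = (\<Sum>n. c1 n * x^n)"
    have C0x: "summable (\<lambda>n. c0 n * x^n) \<and> (\<lambda>K. gK e0 K x) \<longlonglongrightarrow> S0"
      unfolding S0_def by (rule mp[OF spec[OF c0_lim] x1])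
    have C1x: "summable (\<lambda>n. c1 n * x^n) \<and> (\<lambda>K. gK e1 K x) \<longlonglongrightarrow> S1"
      unfolding S1_def by (rule mp[OF spec[OF c1_lim] x1])
    have S0v: "S0 = Th (-1) (x^3) / qpoch_inf x x ^ 2"
      by (rule Glim[of e0 x S0 "-1", OF allI[OF e0_le] conjunct2[OF C0x] x1 x0 _ G0_fin[OF x1]]) simp
    have S1v: "S1 = Th (-(x^2)) (x^3) / qpoch_inf x x ^ 2"
      by (rule Glim[of e1 x S1 "-(x^2)", OF allI[OF e1_le] conjunct2[OF C1x] x1 x0 _ G1_fin[OF x1 x0]]) (use x0 in simp)
    have S0s: "(\<lambda>n. c0 n * x^n) sums S0" unfolding S0_def using conjunct1[OF C0x] by (rule summable_sums)
    have S1s: "(\<lambda>n. c1 n * x^n) sums S1" unfolding S1_def using conjunct1[OF C1x] by (rule summable_sums)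
    have x3: "x^3 = q^9" and x2: "x^2 = q^6" by (simp_all add: x_def power_mult[symmetric])
    have P2: "qpoch_inf (q^2) (q^2) \<noteq> 0"
      using qpoch_pos[of "q^2" "q^2"] q1 by (simp add: abs_square_less_1)
    have Fq: "F q = Th (-1) q / qpoch_inf x x ^ 2"
      unfolding F_def gauss[OF False q1] x_def using P2 by (simp add: field_simps)
    have FS: "F q = S0 - 2 * q * S1"
      unfolding Fq S0v S1v x3 x2 dissect[OF False q1] by (simp add: diff_divide_distrib)
    have f0: "(\<lambda>n. if n mod 3 = 0 then c0 (n div 3) * q^n else 0) sums (q^0 * S0)"
      by (rule sums_spread) (use S0s in \<open>simp_all add: x_def\<close>)
    have f1: "(\<lambda>n. if n mod 3 = 1 then c1 (n div 3) * q^n else 0) sums (q^1 * S1)"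
      by (rule sums_spread) (use S1s in \<open>simp_all add: x_def\<close>)
    have "(\<lambda>n. (if n mod 3 = 0 then c0 (n div 3) * q^n else 0) + (-2) * (if n mod 3 = 1 then c1 (n div 3) * q^n else 0))
        sums (q^0 * S0 + (-2) * (q^1 * S1))"
      by (intro sums_add sums_mult f0 f1)
    moreover have "(\<lambda>n. (if n mod 3 = 0 then c0 (n div 3) * q^n else 0) + (-2) * (if n mod 3 = 1 then c1 (n div 3) * q^n else 0))
        = (\<lambda>n. a n * q ^ n)"
      by (auto simp: a_def fun_eq_iff)
    ultimately show ?thesis unfolding FS by (simp add: mult.assoc)
  qed
  show ?thesis using sums signs by blast
qed

end
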